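(* Let $A$ be a complex $2\times 2$ matrix with $\det(A)=1$, and let $A=PU$ be its polar decomposition, where $P$ is a positive definite Hermitian matrix and $U$ is unitary. Then $A+(A^{\mathbf c})^*$ is a nonzero real multiple of $U$; that is, $\varkappa^\circ([A]_{\mathbb{C}^*})=[A+(A^{\mathbf c})^*]_{\mathbb{R}^*}$, and this class lies in $PSU(2)$.
   Context: For a complex $2\times 2$ matrix $B=\begin{pmatrix}a&b\\ c&d\end{pmatrix}$ write $B^{\mathbf c}=\begin{pmatrix}d&-b\\ -c&a\end{pmatrix}$ and let $B^*$ denote the conjugate transpose. $\mathbb{C}P^3$ is the projectivization of the space of complex $2\times 2$ matrices; $[B]_{\mathbb{C}^*}$ denotes the class of a nonzero matrix up to nonzero complex scalars, and $[B]_{\mathbb{R}^*}$ the class up to nonzero real scalars. $PSL_2(\mathbb{C})\subset\mathbb{C}P^3$ is the set of classes with nonzero determinant, and $PSU(2)=\{[U]_{\mathbb{C}^*}: U\in SU(2)\}\subset PSL_2(\mathbb{C})$. The spherical coamoeba map $\varkappa^\circ\colon PSL_2(\mathbb{C})\to PSU(2)$ sends $[A]_{\mathbb{C}^*}$, with the representative $A$ chosen so that $\det(A)=1$, to the class of the unitary factor $U$ in the polar decomposition $A=PU$. *)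

theory Defs
  imports "HOL-Analysis.Analysis"
begin

definition mat2 :: "complex \<Rightarrow> complex \<Rightarrow> complex \<Rightarrow> complex \<Rightarrow> complex^2^2" where
  "mat2 a b c d = (\<chi> i j. if i = 1 then (if j = 1 then a else b) else (if j = 1 then c else d))"

definition cmat :: "complex^2^2 \<Rightarrow> complex^2^2" where
  "cmat B = mat2 (B$2$2) (- (B$1$2)) (- (B$2$1)) (B$1$1)"

definition cadj :: "complex^'n^'m \<Rightarrow> complex^'m^'n" where
  "cadj B = (\<chi> i j. cnj (B$j$i))"

definition unitary :: "complex^'n^'n \<Rightarrow> bool" where
  "unitary U \<longleftrightarrow> cadj U ** U = mat 1"

definition hermitian :: "complex^'n^'n \<Rightarrow> bool" where
  "hermitian P \<longleftrightarrow> cadj P = P"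

definition pos_def_hermitian :: "complex^'n^'n \<Rightarrow> bool" where
  "pos_def_hermitian P \<longleftrightarrow> hermitian P \<and>
     (\<forall>x::complex^'n. x \<noteq> 0 \<longrightarrow> 0 < Re (\<Sum>i\<in>UNIV. cnj (x$i) * (P *v x)$i))"

definition SU2 :: "(complex^2^2) set" where
  "SU2 = {U. unitary U \<and> det U = 1}"

definition cscale :: "complex \<Rightarrow> complex^'n^'m \<Rightarrow> complex^'n^'m" where
  "cscale c B = (\<chi> i j. c * B$i$j)"

end

theory Submission
  imports Defs
begin

lemma meq: "(M::complex^2^2) = N \<longleftrightarrow> M$1$1 = N$1$1 \<and> M$1$2 = N$1$2 \<and> M$2$1 = N$2$1 \<and> M$2$2 = N$2$2"
  by (auto simp: vec_eq_iff forall_2)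

lemmas ents = matrix_matrix_mult_def cadj_def cmat_def mat2_def cscale_def mat_def sum_2 det_2

lemma t2: fixes a b p q s :: complex
  assumes hp: "cnj p = p" and hs: "cnj s = s"
  shows "mat2 p q (cnj q) s ** mat2 a b (- cnj b) (cnj a) + cadj (cmat (mat2 p q (cnj q) s ** mat2 a b (- cnj b) (cnj a)))
     = cscale (p + s) (mat2 a b (- cnj b) (cnj a))"
  unfolding meq by (simp add: ents hp hs algebra_simps)
lemma t3: "(U::complex^2^2) = mat2 (U$1$1) (U$1$2) (U$2$1) (U$2$2)"
  by (simp add: meq mat2_def)

lemma aux: fixes z :: complex and d::real assumes "cnj z * z = 1" "of_real d * z = 1" "d > 0" shows "d = 1"
proof -
  have "of_real ((norm z)^2) = (1::complex)" using assms(1) complex_norm_square[of z] by (simp add: mult.commute)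
  hence "(norm z)^2 = 1" by (simp only: of_real_eq_1_iff)
  hence "norm z = 1" using norm_ge_zero[of z] by (simp add: power2_eq_1_iff)
  moreover have "norm (of_real d * z) = 1" using assms(2) by simp
  ultimately show ?thesis using assms(3) by (simp add: norm_mult)
qed

theorem lemma2p1:
  fixes A P U :: "complex^2^2"
  assumes "det A = 1"
    and "pos_def_hermitian P"
    and "unitary U"
    and "A = P ** U"
  shows "(\<exists>r::real. r \<noteq> 0 \<and> A + cadj (cmat A) = cscale (complex_of_real r) U)
         \<and> (\<exists>V\<in>SU2. \<exists>c::complex. c \<noteq> 0 \<and> A + cadj (cmat A) = cscale c V)"
proof -
  have herm: "cadj P = P" and pd: "\<And>x::complex^2. x \<noteq> 0 \<Longrightarrow> 0 < Re (\<Sum>i\<in>UNIV. cnj (x$i) * (P *v x)$i)"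
    using assms(2) unfolding pos_def_hermitian_def hermitian_def by auto
  define p where "p = P$1$1"
  define q where "q = P$1$2"
  define s where "s = P$2$2"
  have h21: "P$2$1 = cnj q" using arg_cong[OF herm, of "\<lambda>M. M$2$1"] by (simp add: cadj_def q_def)
  have hp: "cnj p = p" using arg_cong[OF herm, of "\<lambda>M. M$1$1"] by (simp add: cadj_def p_def)
  have hs: "cnj s = s" using arg_cong[OF herm, of "\<lambda>M. M$2$2"] by (simp add: cadj_def s_def)
  have pr: "p = of_real (Re p)" using hp by (metis complex_is_Real_iff Reals_cnj_iff of_real_Re)
  have sr: "s = of_real (Re s)" using hs by (metis complex_is_Real_iff Reals_cnj_iff of_real_Re)
  have "0 < Re (\<Sum>i\<in>UNIV. cnj ((axis 1 1 :: complex^2)$i) * (P *v axis 1 1)$i)"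
    by (rule pd) (simp add: vec_eq_iff axis_def)
  hence ppos: "Re p > 0" by (simp add: sum_2 matrix_vector_mult_def axis_def p_def)
  have "0 < Re (\<Sum>i\<in>UNIV. cnj ((axis 2 1 :: complex^2)$i) * (P *v axis 2 1)$i)"
    by (rule pd) (simp add: vec_eq_iff axis_def)
  hence spos: "Re s > 0" by (simp add: sum_2 matrix_vector_mult_def axis_def s_def)
  define x :: "complex^2" where "x = (\<chi> i. if i = 1 then s else - cnj q)"
  have "x \<noteq> 0" using spos by (auto simp: x_def vec_eq_iff)
  hence "0 < Re (\<Sum>i\<in>UNIV. cnj (x$i) * (P *v x)$i)" by (rule pd)
  hence "0 < Re (cnj s * (p * s - q * cnj q) + q * (cnj q * s - s * cnj q))"
    by (simp add: sum_2 matrix_vector_mult_def x_def p_def q_def s_def h21 algebra_simps)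
  hence "0 < Re (s * (p * s - q * cnj q))" using hs by simp
  hence "0 < Re s * Re (p * s - q * cnj q)" by (subst (asm) (1) sr) simp
  hence dP: "Re (det P) > 0" and dPr: "det P = of_real (Re (det P))"
    using spos
     apply (simp add: det_2 h21 p_def q_def s_def zero_less_mult_iff mult.commute)
    apply (simp add: det_2 h21 flip: p_def q_def s_def)
    apply (subst pr, subst sr) 
    using hp hs by (simp add: complex_eq_iff)
  have dd: "det A = det P * det U" using assms(4) det_mul by simp
  have uu: "cadj U ** U = mat 1" using assms(3) unitary_def by auto
  have "det (cadj U ** U) = 1" unfolding uu by (rule det_I)
  hence "det (cadj U) * det U = 1" by (simp only: det_mul)
  moreover have "det (cadj U) = cnj (det U)" by (simp add: det_2 cadj_def)
  ultimately have n1: "cnj (det U) * det U = 1" by simp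
  have "det P * det U = 1" using dd assms(1) by simp
  hence "Re (det P) = 1" using aux[OF n1, of "Re (det P)"] dPr dP by simp
  hence dP1: "det P = 1" using dPr by simp
  hence dU1: "det U = 1" using \<open>det P * det U = 1\<close> by simp
  have ucm: "U ** cmat U = mat 1"
    using dU1 by (simp add: meq ents algebra_simps)
  have "cadj U = cadj U ** (U ** cmat U)" using ucm by simp
  also have "\<dots> = cmat U" by (simp add: matrix_mul_assoc uu)
  finally have cu: "cmat U = cadj U" by simp
  have u21: "U$2$1 = - cnj (U$1$2)" using arg_cong[OF cu, of "\<lambda>M. M$1$2"]
    by (simp add: cmat_def cadj_def mat2_def) (metis complex_cnj_cnj complex_cnj_minus)
  have u22: "U$2$2 = cnj (U$1$1)" using arg_cong[OF cu, of "\<lambda>M. M$1$1"]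
    by (simp add: cmat_def cadj_def mat2_def)
  have Ue: "U = mat2 (U$1$1) (U$1$2) (- cnj (U$1$2)) (cnj (U$1$1))"
    using t3[of U] u21 u22 by simp
  have Pe: "P = mat2 p q (cnj q) s"
    using t3[of P] h21 by (simp add: p_def q_def s_def)
  have key: "A + cadj (cmat A) = cscale (p + s) U"
    unfolding assms(4) using t2[OF hp hs, of q "U$1$1" "U$1$2"]
    by (simp only: Ue[symmetric] Pe[symmetric])
  have ps: "p + s = complex_of_real (Re p + Re s)" using pr sr by (metis of_real_add)
  have U: "U \<in> SU2" using assms(3) dU1 by (simp add: SU2_def)
  show ?thesis
    using key ps ppos spos U
    by (metis add_pos_pos less_irrefl of_real_eq_0_iff)
qed

end
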